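(* Let $\mathbf b=(b_1,b_2)\in\mathbb N^2$ with $\gcd(b_1,b_2)=1$. Let $m,J\in\mathbb N$, $0<\alpha<1$, and $\mathbf s=(s_1,\dots,s_J)$, $\mathbf t=(t_1,\dots,t_J)\in\mathbb Z^J$ such that $\gcd_{\mathbf b}(s_{j_1}-s_{j_2},t_{j_1}-t_{j_2})=1$ for all $1\le j_1\ne j_2\le J$. Then for every integer $n>\max_{1\le j\le J}|s_j|$ and every $\varepsilon>0$, $$\sum_{\substack{0\le k\le m\\ \gcd_{\mathbf b}(n-s_j,\,k-t_j)=1,\ 1\le j\le J}}\binom mk\alpha^k(1-\alpha)^{m-k}=f_{\mathbf b,\mathbf s}(n)+O_{\alpha,J,\varepsilon}\big(n^{\varepsilon}m^{-1/2}\big),$$ where $$f_{\mathbf b,\mathbf s}(n)=\sum_{\substack{d_1,\dots,d_J\in\mathbb N,\ d_j^{b_1}\mid n-s_j\ (1\le j\le J)\\ \gcd(d_{j_1},d_{j_2})=1\ \forall\, 1\le j_1\ne j_2\le J}}\frac{\mu(d_1)\cdots\mu(d_J)}{(d_1\cdots d_J)^{b_2}}.$$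
   Context: For integers $m,n$ not both zero, $\gcd_{\mathbf b}(m,n):=\max\{d\in\mathbb N: d^{b_1}\mid m,\ d^{b_2}\mid n\}$. $\mu$ denotes the Möbius function. *)

theory Defs
  imports "HOL-Computational_Algebra.Computational_Algebra" "HOL-Library.FuncSet"
begin

definition moebius_mu :: "nat \<Rightarrow> int" where
  "moebius_mu d = (if d = 0 then 0 else if squarefree d then (-1) ^ card (prime_factors d) else 0)"

text \<open>gcd_b(m,n) = max{d in N : d^b1 | m, d^b2 | n}; for m = n = 0 (where the paper's
  definition is not applicable) we set the value 0.\<close>
definition gcdb :: "nat \<Rightarrow> nat \<Rightarrow> int \<Rightarrow> int \<Rightarrow> nat" where
  "gcdb b1 b2 m n = (if m = 0 \<and> n = 0 then 0
      else Max {d::nat. d \<ge> 1 \<and> int d ^ b1 dvd m \<and> int d ^ b2 dvd n})"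

definition fbs :: "nat \<Rightarrow> nat \<Rightarrow> nat \<Rightarrow> (nat \<Rightarrow> int) \<Rightarrow> int \<Rightarrow> real" where
  "fbs b1 b2 J s n =
     (\<Sum>d \<in> {d \<in> {..<J} \<rightarrow>\<^sub>E {1..}.
              (\<forall>j<J. int (d j) ^ b1 dvd n - s j) \<and>
              (\<forall>j1<J. \<forall>j2<J. j1 \<noteq> j2 \<longrightarrow> coprime (d j1) (d j2))}.
        real_of_int (\<Prod>j<J. moebius_mu (d j)) / real (\<Prod>j<J. d j) ^ b2)"

end

theory Submission
  imports Defs "HOL-Number_Theory.Cong"
begin


lemma sum_pow_card_neg: "finite P \<Longrightarrow> (\<Sum>T\<in>Pow P. (-1::int) ^ card T) = (if P = {} then 1 else 0)"
proof (induction P rule: finite_induct)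
  case empty then show ?case by simp
next
  case (insert x P)
  have d: "Pow P \<inter> insert x ` Pow P = {}" using insert by auto
  have inj: "inj_on (insert x) (Pow P)" using insert unfolding inj_on_def by (metis Pow_iff insert_absorb insert_ident subsetD)
  have "(\<Sum>T\<in>Pow (insert x P). (-1::int) ^ card T) = (\<Sum>T\<in>Pow P. (-1::int) ^ card T) + (\<Sum>T\<in>insert x ` Pow P. (-1::int) ^ card T)"
    unfolding Pow_insert using insert d by (intro sum.union_disjoint) auto
  also have "(\<Sum>T\<in>insert x ` Pow P. (-1::int) ^ card T) = (\<Sum>T\<in>Pow P. (-1::int) ^ card (insert x T))"
    using inj by (simp add: sum.reindex)
  also have "\<dots> = - (\<Sum>T\<in>Pow P. (-1::int) ^ card T)"
    unfolding sum_negf[symmetric] using insert by (intro sum.cong refl) (auto simp: finite_subset card_insert_if)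
  finally show ?case by simp
qed

lemma prod_pow_dvd:
  fixes T :: "nat set" and x :: int
  assumes "finite T" "\<forall>p\<in>T. prime p" "\<forall>p\<in>T. int p ^ b dvd x"
  shows "int (\<Prod>T) ^ b dvd x"
  using assms
proof (induction T rule: finite_induct)
  case empty then show ?case by simp
next
  case (insert p T)
  have cop: "coprime (int p ^ b) (int (\<Prod>T) ^ b)"
  proof -
    have "coprime p (\<Prod>T)"
      using insert by (intro prod_coprime_right) (metis insert_iff primes_coprime)
    then have "coprime (int p) (int (\<Prod>T))" by (simp only: coprime_int_iff)
    then show ?thesis by (simp only: coprime_power_left_iff coprime_power_right_iff simp_thms)
  qed
  have "int (\<Prod>(insert p T)) ^ b = int p ^ b * int (\<Prod>T) ^ b"
    using insert by (simp add: power_mult_distrib)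
  then show ?case using insert cop by (simp add: divides_mult)
qed

lemma prod_primes_props:
  fixes T :: "nat set"
  assumes "finite T" "\<forall>p\<in>T. prime p"
  shows "prime_factors (\<Prod>T) = T" "squarefree (\<Prod>T)" "\<Prod>T \<ge> 1"
proof -
  have "0 \<notin> id ` T" using assms by auto
  then show "prime_factors (\<Prod>T) = T"
    using assms prime_factors_prod[of T id] by (auto simp: prime_prime_factors)
  show "squarefree (\<Prod>T)"
    using assms by (intro squarefree_prod_coprime) (auto simp: primes_coprime squarefree_prime)
  show "\<Prod>T \<ge> 1" using assms by (metis One_nat_def Suc_leI not_prime_0 prod_pos gr0I)
qed

lemma squarefree_eq_prod:
  fixes d :: nat
  assumes "d \<ge> 1" "squarefree d"
  shows "d = \<Prod>(prime_factors d)"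
proof -
  have "d = (\<Prod>p \<in> prime_factors d. p ^ multiplicity p d)" using assms prime_factorization_nat by auto
  also have "\<dots> = \<Prod>(prime_factors d)"
    using assms squarefree_factorial_semiring'[of d] by (intro prod.cong) auto
  finally show ?thesis .
qed


lemma fin_pow_dvd:
  fixes x :: int
  assumes "x \<noteq> 0" "b \<ge> 1"
  shows "{d::nat. d \<ge> 1 \<and> int d ^ b dvd x} \<subseteq> {..nat \<bar>x\<bar>}"
proof
  fix d assume d: "d \<in> {d::nat. d \<ge> 1 \<and> int d ^ b dvd x}"
  have "int d \<le> int d ^ b" using d assms by (simp add: self_le_power)
  also have "\<dots> = \<bar>int d ^ b\<bar>" by simp
  also have "\<dots> \<le> \<bar>x\<bar>" using d assms(1) by (intro dvd_imp_le_int) auto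
  finally have "int d \<le> \<bar>x\<bar>" .
  then show "d \<in> {..nat \<bar>x\<bar>}" by simp
qed

lemma fin_pow_dvd': "x \<noteq> 0 \<Longrightarrow> b \<ge> 1 \<Longrightarrow> finite {d::nat. d \<ge> 1 \<and> int d ^ b dvd x}"
  by (rule finite_subset[OF fin_pow_dvd]) auto

lemma mu_prod_primes:
  assumes "finite T" "\<forall>p\<in>T. prime p"
  shows "moebius_mu (\<Prod>T) = (-1) ^ card T"
  using prod_primes_props[OF assms] unfolding moebius_mu_def by auto

lemma mobius_gcdb:
  fixes a c :: int and b1 b2 :: nat
  assumes a: "a \<noteq> 0" and b: "b1 \<ge> 1" "b2 \<ge> 1"
  shows "(if gcdb b1 b2 a c = 1 then 1 else 0) =
    (\<Sum>d\<in>{d. d \<ge> 1 \<and> int d ^ b1 dvd a}. if int d ^ b2 dvd c then moebius_mu d else 0)"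
proof -
  define D where "D = {d::nat. d \<ge> 1 \<and> int d ^ b1 dvd a}"
  define S where "S = {d::nat. d \<ge> 1 \<and> int d ^ b1 dvd a \<and> int d ^ b2 dvd c}"
  define P where "P = {p\<in>S. prime p}"
  have finD: "finite D" unfolding D_def using fin_pow_dvd'[OF a b(1)] .
  have SD: "S = {d\<in>D. int d ^ b2 dvd c}" unfolding S_def D_def by auto
  have finS: "finite S" using finD SD by auto
  have finP: "finite P" using finS P_def by auto
  have "(\<Sum>d\<in>D. if int d ^ b2 dvd c then moebius_mu d else 0) = (\<Sum>d\<in>S. moebius_mu d)"
    unfolding SD using finD by (simp add: sum.inter_filter)
  also have "\<dots> = (\<Sum>d\<in>{d\<in>S. squarefree d}. moebius_mu d)"
    using finS by (intro sum.mono_neutral_right) (auto simp: moebius_mu_def)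
  also have "\<dots> = (\<Sum>T\<in>Pow P. (-1) ^ card T)"
  proof (rule sum.reindex_bij_witness[where j = "\<lambda>d. \<Prod>d" and i = prime_factors, symmetric])
    fix T assume T: "T \<in> Pow P"
    then have fT: "finite T" and pT: "\<forall>p\<in>T. prime p" using finP P_def finite_subset by auto
    note pp = prod_primes_props[OF fT pT]
    show "prime_factors (\<Prod>T) = T" using pp by simp
    have "\<forall>p\<in>T. int p ^ b1 dvd a" "\<forall>p\<in>T. int p ^ b2 dvd c" using T P_def S_def by auto
    then show "\<Prod>T \<in> {d\<in>S. squarefree d}"
      using pp prod_pow_dvd[OF fT pT] unfolding S_def by auto
    show "moebius_mu (\<Prod>T) = (-1) ^ card T" using mu_prod_primes[OF fT pT] .
  next
    fix d assume d: "d \<in> {d\<in>S. squarefree d}"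
    then have d1: "d \<ge> 1" "squarefree d" using S_def by auto
    show "\<Prod>(prime_factors d) = d" using squarefree_eq_prod[OF d1] by simp
    show "prime_factors d \<in> Pow P"
    proof (rule PowI, rule subsetI)
      fix p assume p: "p \<in> prime_factors d"
      then have pr: "prime p" "p dvd d" by (auto simp: prime_factors_dvd)
      then have h1: "int p ^ b1 dvd int d ^ b1" "int p ^ b2 dvd int d ^ b2" by (simp_all add: dvd_power_same)
      have "int d ^ b1 dvd a" "int d ^ b2 dvd c" using d S_def by auto
      then have "int p ^ b1 dvd a" "int p ^ b2 dvd c" using h1 dvd_trans by blast+
      then show "p \<in> P" using pr unfolding P_def S_def by (simp add: prime_gt_0_nat Suc_le_eq)
    qed
  qed
  also have "\<dots> = (if P = {} then 1 else 0)" using sum_pow_card_neg[OF finP] .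
  finally have chain: "(\<Sum>d\<in>D. if int d ^ b2 dvd c then moebius_mu d else 0) = (if P = {} then 1 else 0)" .
  have Peq: "(P = {}) = (gcdb b1 b2 a c = 1)"
  proof -
    have g: "gcdb b1 b2 a c = Max S" unfolding gcdb_def S_def using a by simp
    have "1 \<in> S" unfolding S_def by simp
    then have MS: "Max S \<in> S" "Max S \<ge> 1" using finS Max_in Max_ge by (blast, blast)
    show ?thesis
    proof
      assume P: "P = {}"
      have "Max S = 1"
      proof (rule ccontr)
        assume "Max S \<noteq> 1"
        then obtain p where p: "prime p" "p dvd Max S" using prime_factor_nat by blast
        then have h1: "int p ^ b1 dvd int (Max S) ^ b1" "int p ^ b2 dvd int (Max S) ^ b2" by (simp_all add: dvd_power_same)
        have "int (Max S) ^ b1 dvd a" "int (Max S) ^ b2 dvd c" using MS S_def by auto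
        then have "int p ^ b1 dvd a" "int p ^ b2 dvd c" using h1 dvd_trans by blast+
        then have "p \<in> P" using p unfolding P_def S_def by (simp add: prime_gt_0_nat Suc_le_eq)
        then show False using P by simp
      qed
      then show "gcdb b1 b2 a c = 1" using g by simp
    next
      assume "gcdb b1 b2 a c = 1"
      then have M1: "Max S = 1" using g by simp
      show "P = {}"
      proof (rule ccontr)
        assume "P \<noteq> {}"
        then obtain p where "p \<in> P" by auto
        then have "p \<le> Max S" "p \<ge> 2" using finS P_def by (auto intro: Max_ge prime_ge_2_nat)
        then show False using M1 by simp
      qed
    qed
  qed
  have e: "(if gcdb b1 b2 a c = 1 then 1 else 0) = (if P = {} then (1::int) else 0)" using Peq by simp
  show ?thesis using trans[OF e sym[OF chain]] unfolding D_def .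
qed




lemma resid_gen:
  fixes f :: "nat \<Rightarrow> real" and Q N :: nat and c :: int
  assumes Q: "Q \<ge> 1" and nn: "\<forall>l. f l \<ge> 0" and mono: "\<forall>l. f (Suc l) \<le> f l" and z: "\<forall>l>N. f l = 0"
  shows "\<bar>real Q * (\<Sum>l\<le>N. if int Q dvd int l - c then f l else 0) - (\<Sum>l\<le>N. f l)\<bar> \<le> real Q * f 0"
proof -
  have dec: "decseq f" using mono by (intro decseq_SucI) auto
  define S where "S e = (\<Sum>l\<le>N. if l mod Q = e then f l else 0)" for e
  define e0 where "e0 = nat (c mod int Q)"
  have e0: "e0 < Q"
  proof -
    have "0 \<le> c mod int Q" "c mod int Q < int Q" using Q by simp_all
    then show ?thesis unfolding e0_def by (simp add: nat_less_iff)
  qed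
  have cond: "int Q dvd int l - c \<longleftrightarrow> l mod Q = e0" for l
  proof -
    have "int Q dvd int l - c \<longleftrightarrow> int l mod int Q = c mod int Q" by (simp add: mod_eq_dvd_iff)
    also have "\<dots> \<longleftrightarrow> int (l mod Q) = c mod int Q" by (simp add: zmod_int)
    also have "\<dots> \<longleftrightarrow> l mod Q = e0" unfolding e0_def using Q by auto
    finally show ?thesis .
  qed
  have Sform: "S e = (\<Sum>i\<le>N. f (e + Q * i))" if e: "e < Q" for e
  proof -
    have inj: "inj_on (\<lambda>i. e + Q * i) {..N}" using Q unfolding inj_on_def by auto
    have "(\<Sum>i\<le>N. f (e + Q * i)) = (\<Sum>l\<in>(\<lambda>i. e + Q * i) ` {..N}. f l)"
      using inj by (simp add: sum.reindex)
    also have "\<dots> = (\<Sum>l\<in>{l\<in>{..N}. l mod Q = e}. f l)"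
    proof (rule sum.mono_neutral_cong)
      show "finite ((\<lambda>i. e + Q * i) ` {..N})" by simp
      show "finite {l \<in> {..N}. l mod Q = e}" by simp
      show "f i = 0" if "i \<in> (\<lambda>i. e + Q * i) ` {..N} - {l \<in> {..N}. l mod Q = e}" for i
        using that z e by (fastforce simp: not_less[symmetric])
      show "f l = 0" if l: "l \<in> {l \<in> {..N}. l mod Q = e} - (\<lambda>i. e + Q * i) ` {..N}" for l
      proof -
        have em: "l mod Q = e" using l by simp
        have "l = e + Q * (l div Q)" using mod_mult_div_eq[of l Q] em by linarith
        moreover have "l \<le> N" using l by simp
        then have "l div Q \<le> N" using div_le_dividend[of l Q] by linarith
        ultimately show "f l = 0" using l by auto
      qed
    qed auto
    also have "\<dots> = S e" unfolding S_def by (rule sum.inter_filter) simp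
    finally show ?thesis by simp
  qed
  have Sle: "S e \<le> f 0 + S e'" if "e < Q" "e' < Q" for e e'
  proof (cases N)
    case 0
    then have "S e \<le> f 0" using Sform[OF that(1)] dec by (simp add: decseqD)
    moreover have "S e' \<ge> 0" unfolding S_def using nn by (intro sum_nonneg) auto
    ultimately show ?thesis by simp
  next
    case (Suc n)
    have "S e = f e + (\<Sum>i\<le>n. f (e + Q * Suc i))"
      unfolding Sform[OF that(1)] Suc sum.atMost_Suc_shift by simp
    also have "\<dots> \<le> f 0 + (\<Sum>i\<le>n. f (e' + Q * i))"
    proof (intro add_mono sum_mono)
      show "f e \<le> f 0" using dec by (simp add: decseqD)
      fix i assume "i \<in> {..n}"
      have "e' + Q * i \<le> e + Q * Suc i" using that by simp
      then show "f (e + Q * Suc i) \<le> f (e' + Q * i)" using dec by (simp add: decseqD)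
    qed
    also have "\<dots> \<le> f 0 + (\<Sum>i\<le>N. f (e' + Q * i))"
      using Suc nn by (intro add_left_mono sum_mono2) auto
    finally show ?thesis using Sform[OF that(2)] by simp
  qed
  have tot: "(\<Sum>l\<le>N. f l) = (\<Sum>e<Q. S e)"
  proof -
    have "(\<Sum>e<Q. S e) = (\<Sum>l\<le>N. \<Sum>e<Q. if l mod Q = e then f l else 0)"
      unfolding S_def by (rule sum.swap)
    also have "\<dots> = (\<Sum>l\<le>N. f l)"
      using Q by (intro sum.cong refl) (simp add: sum.delta)
    finally show ?thesis by simp
  qed
  have lhs: "(\<Sum>l\<le>N. if int Q dvd int l - c then f l else 0) = S e0"
    unfolding S_def cond ..
  have "real Q * S e0 - (\<Sum>e<Q. S e) = (\<Sum>e<Q. S e0 - S e)"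
    by (simp add: sum_subtractf)
  also have "\<bar>\<dots>\<bar> \<le> (\<Sum>e<Q. \<bar>S e0 - S e\<bar>)" by (rule sum_abs)
  also have "\<dots> \<le> (\<Sum>e<Q. f 0)"
  proof (rule sum_mono)
    fix e assume "e \<in> {..<Q}"
    then show "\<bar>S e0 - S e\<bar> \<le> f 0" using Sle[OF e0, of e] Sle[of e e0] e0 by auto
  qed
  also have "\<dots> = real Q * f 0" by simp
  finally show ?thesis unfolding lhs tot .
qed




definition pb :: "real \<Rightarrow> nat \<Rightarrow> nat \<Rightarrow> real" where
  "pb a m k = real (m choose k) * a ^ k * (1 - a) ^ (m - k)"

lemma pb_nonneg: "0 \<le> a \<Longrightarrow> a \<le> 1 \<Longrightarrow> pb a m k \<ge> 0"
  unfolding pb_def by simp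

lemma pb_zero: "m < k \<Longrightarrow> pb a m k = 0"
  unfolding pb_def by simp

lemma pb_sum: "(\<Sum>k\<le>m. pb a m k) = 1"
  using binomial_ring[of a "1 - a" m] unfolding pb_def by simp

lemma choose_ratio: "k < m \<Longrightarrow> Suc k * (m choose Suc k) = (m - k) * (m choose k)"
  using binomial_absorption[of k m] binomial_absorb_comp[of m k] by simp

lemma pb_ratio:
  assumes "k < m"
  shows "pb a m (Suc k) * (real (Suc k) * (1 - a)) = pb a m k * (real (m - k) * a)"
proof -
  have c: "real (Suc k) * real (m choose Suc k) = real (m - k) * real (m choose k)"
    using choose_ratio[OF assms] by (metis of_nat_mult)
  have e: "m - k = Suc (m - Suc k)" using assms by simp
  have "pb a m (Suc k) * (real (Suc k) * (1 - a)) =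
        (real (Suc k) * real (m choose Suc k)) * a ^ Suc k * (1 - a) ^ Suc (m - Suc k)"
    unfolding pb_def by (simp add: algebra_simps)
  also have "\<dots> = (real (m - k) * real (m choose k)) * a ^ Suc k * (1 - a) ^ (m - k)"
    unfolding c e ..
  also have "\<dots> = pb a m k * (real (m - k) * a)"
    unfolding pb_def by (simp add: algebra_simps)
  finally show ?thesis .
qed

definition mode :: "real \<Rightarrow> nat \<Rightarrow> nat" where
  "mode a m = nat \<lfloor>real (Suc m) * a\<rfloor>"

lemma mode_props:
  assumes "0 < a" "a < 1"
  shows "real (mode a m) \<le> real (Suc m) * a" "real (Suc m) * a < real (mode a m) + 1" "mode a m \<le> m"
proof -
  have p: "0 \<le> real (Suc m) * a" using assms by simp
  show 1: "real (mode a m) \<le> real (Suc m) * a" unfolding mode_def using p by linarith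
  show "real (Suc m) * a < real (mode a m) + 1" unfolding mode_def using p by linarith
  have "real (Suc m) * a < real (Suc m)" using assms by simp
  then have "real (mode a m) < real (Suc m)" using 1 by linarith
  then show "mode a m \<le> m" by simp
qed

lemma pb_inc:
  assumes a: "0 < a" "a < 1" and k: "k < mode a m"
  shows "pb a m k \<le> pb a m (Suc k)"
proof -
  note mp = mode_props[OF a, of m]
  have km: "k < m" using k mp by simp
  have X: "0 < real (Suc k) * (1 - a)" using a by simp
  have "real (Suc k) \<le> real (Suc m) * a" using k mp(1) by linarith
  then have XY: "real (Suc k) * (1 - a) \<le> real (m - k) * a"
    using km by (simp add: of_nat_diff algebra_simps)
  have "pb a m k * (real (Suc k) * (1 - a)) \<le> pb a m k * (real (m - k) * a)"
    using XY pb_nonneg[of a m k] a by (intro mult_left_mono) auto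
  also have "\<dots> = pb a m (Suc k) * (real (Suc k) * (1 - a))" using pb_ratio[OF km] by simp
  finally show ?thesis using X by (rule mult_right_le_imp_le)
qed

lemma pb_dec:
  assumes a: "0 < a" "a < 1" and k: "mode a m \<le> k"
  shows "pb a m (Suc k) \<le> pb a m k"
proof (cases "k < m")
  case False
  then show ?thesis using pb_zero[of m "Suc k" a] pb_nonneg[of a m k] a by simp
next
  case km: True
  note mp = mode_props[OF a, of m]
  have X: "0 < real (Suc k) * (1 - a)" using a by simp
  have "real (Suc m) * a \<le> real (Suc k)" using k mp(2) by linarith
  then have XY: "real (m - k) * a \<le> real (Suc k) * (1 - a)"
    using km by (simp add: of_nat_diff algebra_simps)
  have "pb a m (Suc k) * (real (Suc k) * (1 - a)) = pb a m k * (real (m - k) * a)" using pb_ratio[OF km] .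
  also have "\<dots> \<le> pb a m k * (real (Suc k) * (1 - a))"
    using XY pb_nonneg[of a m k] a by (intro mult_left_mono) auto
  finally show ?thesis using X by (rule mult_right_le_imp_le)
qed


lemma split_sum:
  fixes h :: "nat \<Rightarrow> real"
  assumes M: "M \<le> m" and z: "\<forall>k>m. h k = 0"
  shows "(\<Sum>k\<le>m. h k) = (\<Sum>l\<le>m. if l < M then h (M - Suc l) else 0) + (\<Sum>l\<le>m. h (M + l))"
proof -
  have 1: "(\<Sum>k\<le>m. h k) = (\<Sum>k<M. h k) + (\<Sum>k\<in>{M..<Suc m}. h k)"
    using sum.atLeastLessThan_concat[of 0 M "Suc m" h] M by (simp add: atLeast0LessThan lessThan_Suc_atMost)
  have 2: "(\<Sum>k<M. h k) = (\<Sum>l<M. h (M - Suc l))" by (rule sum.nat_diff_reindex[symmetric])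
  have 3: "(\<Sum>l<M. h (M - Suc l)) = (\<Sum>l\<le>m. if l < M then h (M - Suc l) else 0)"
  proof -
    have "{l\<in>{..m}. l < M} = {..<M}" using M by auto
    then show ?thesis using sum.inter_filter[of "{..m}" "\<lambda>l. h (M - Suc l)" "\<lambda>l. l < M"] by simp
  qed
  have 4: "(\<Sum>k\<in>{M..<Suc m}. h k) = (\<Sum>l\<in>{0..<Suc m - M}. h (l + M))"
    using sum.shift_bounds_nat_ivl[of h 0 M "Suc m - M"] M by simp
  have 5: "(\<Sum>l\<in>{0..<Suc m - M}. h (l + M)) = (\<Sum>l\<le>m. h (M + l))"
    using z by (intro sum.mono_neutral_cong_left) (auto simp: add.commute)
  show ?thesis using 1 2 3 4 5 by simp
qed

lemma binom_resid:
  fixes r :: int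
  assumes a: "0 < a" "a < 1" and Q: "Q \<ge> 1"
  shows "\<bar>(\<Sum>k\<le>m. if int Q dvd int k - r then pb a m k else 0) - 1 / real Q\<bar> \<le> 2 * pb a m (mode a m)"
proof -
  define M where "M = mode a m"
  note mp = mode_props[OF a, of m]
  have Mm: "M \<le> m" using mp M_def by simp
  define fL where "fL l = (if l < M then pb a m (M - Suc l) else 0)" for l
  define fR where "fR l = pb a m (M + l)" for l
  have pbn: "\<And>k. pb a m k \<ge> 0" using pb_nonneg a by simp
  have fLn: "\<forall>l. fL l \<ge> 0" unfolding fL_def using pbn by simp
  have fRn: "\<forall>l. fR l \<ge> 0" unfolding fR_def using pbn by simp
  have fLm: "\<forall>l. fL (Suc l) \<le> fL l"
  proof
    fix l
    show "fL (Suc l) \<le> fL l"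
    proof (cases "Suc l < M")
      case True
      have "M - Suc l = Suc (M - Suc (Suc l))" using True by simp
      moreover have "M - Suc (Suc l) < mode a m" using True M_def by simp
      ultimately have "pb a m (M - Suc (Suc l)) \<le> pb a m (M - Suc l)" using pb_inc[OF a] by simp
      then show ?thesis unfolding fL_def using True by simp
    next
      case False
      then show ?thesis unfolding fL_def using pbn by simp
    qed
  qed
  have fRm: "\<forall>l. fR (Suc l) \<le> fR l" unfolding fR_def using pb_dec[OF a] M_def by simp
  have fLz: "\<forall>l>m. fL l = 0" unfolding fL_def using Mm by simp
  have fRz: "\<forall>l>m. fR l = 0" unfolding fR_def using pb_zero by simp
  define cL where "cL = int M - 1 - r"
  define cR where "cR = r - int M"
  define g where "g k = (if int Q dvd int k - r then pb a m k else 0)" for k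
  have gz: "\<forall>k>m. g k = 0" unfolding g_def using pb_zero by simp
  have "(\<Sum>k\<le>m. g k) = (\<Sum>l\<le>m. if l < M then g (M - Suc l) else 0) + (\<Sum>l\<le>m. g (M + l))"
    by (rule split_sum[OF Mm gz])
  also have "(\<Sum>l\<le>m. if l < M then g (M - Suc l) else 0) = (\<Sum>l\<le>m. if int Q dvd int l - cL then fL l else 0)"
  proof (intro sum.cong refl)
    fix l
    show "(if l < M then g (M - Suc l) else 0) = (if int Q dvd int l - cL then fL l else 0)"
    proof (cases "l < M")
      case True
      have "int (M - Suc l) - r = - (int l - cL)" using True unfolding cL_def by (simp add: of_nat_diff)
      then have "int Q dvd int (M - Suc l) - r \<longleftrightarrow> int Q dvd int l - cL" by (simp add: dvd_diff_commute)
      then show ?thesis unfolding g_def fL_def using True by simp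
    qed (simp add: fL_def)
  qed
  also have "(\<Sum>l\<le>m. g (M + l)) = (\<Sum>l\<le>m. if int Q dvd int l - cR then fR l else 0)"
  proof (intro sum.cong refl)
    fix l
    have "int (M + l) - r = int l - cR" unfolding cR_def by simp
    then have eqv: "int Q dvd int (M + l) - r \<longleftrightarrow> int Q dvd int l - cR" by (simp only:)
    show "g (M + l) = (if int Q dvd int l - cR then fR l else 0)" unfolding g_def fR_def by (rule if_cong[OF eqv]) (rule refl)+
  qed
  finally have sumeq: "(\<Sum>k\<le>m. g k) = (\<Sum>l\<le>m. if int Q dvd int l - cL then fL l else 0) + (\<Sum>l\<le>m. if int Q dvd int l - cR then fR l else 0)" .
  have tot: "(\<Sum>l\<le>m. fL l) + (\<Sum>l\<le>m. fR l) = 1"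
    using split_sum[OF Mm, of "pb a m"] pb_zero pb_sum[of a m] unfolding fL_def fR_def by simp
  note RL = resid_gen[OF Q fLn fLm fLz, of cL]
  note RR = resid_gen[OF Q fRn fRm fRz, of cR]
  have fL0: "fL 0 \<le> pb a m M"
  proof (cases "0 < M")
    case True
    then have "M = Suc (M - 1)" by simp
    then have "pb a m (M - 1) \<le> pb a m M" using pb_inc[OF a, of "M - 1" m] True M_def by (metis diff_less zero_less_one)
    then show ?thesis unfolding fL_def using True by simp
  next
    case False then show ?thesis unfolding fL_def using pbn by simp
  qed
  have fR0: "fR 0 = pb a m M" unfolding fR_def by simp
  define A where "A = (\<Sum>l\<le>m. if int Q dvd int l - cL then fL l else 0)"
  define B where "B = (\<Sum>l\<le>m. if int Q dvd int l - cR then fR l else 0)"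
  have "\<bar>real Q * (A + B) - 1\<bar> \<le> real Q * fL 0 + real Q * fR 0"
    using RL RR tot unfolding A_def B_def by (simp add: algebra_simps)
  also have "\<dots> \<le> real Q * (2 * pb a m M)" using fL0 fR0 Q by (simp add: algebra_simps)
  finally have h: "\<bar>real Q * (A + B) - 1\<bar> \<le> real Q * (2 * pb a m M)" .
  have Qp: "real Q > 0" using Q by simp
  have "\<bar>A + B - 1 / real Q\<bar> = \<bar>real Q * (A + B) - 1\<bar> / real Q"
    using Qp by (simp add: field_simps abs_div_pos[symmetric])
  also have "\<dots> \<le> 2 * pb a m M" using h Qp by (simp add: divide_le_eq mult.commute)
  finally show ?thesis using sumeq unfolding A_def B_def g_def M_def by simp
qed


lemma pb_le_1: "0 < a \<Longrightarrow> a < 1 \<Longrightarrow> pb a m k \<le> 1"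
proof (cases "k \<le> m")
  case True
  assume a: "0 < a" "a < 1"
  have "pb a m k \<le> (\<Sum>k\<le>m. pb a m k)"
    using True a pb_nonneg by (intro member_le_sum) auto
  then show ?thesis using pb_sum by simp
qed (simp add: pb_zero)

lemma pb_mode_bound:
  assumes a: "0 < a" "a < 1" and m: "m \<ge> 1"
  shows "pb a m (mode a m) \<le> 2 / sqrt (a * (1 - a) / 2 * real m)"
proof -
  define \<gamma> where "\<gamma> = a * (1 - a) / 2"
  have \<gamma>: "\<gamma> > 0" unfolding \<gamma>_def using a by simp
  define x where "x = sqrt (\<gamma> * real m)"
  have x0: "x > 0" unfolding x_def using \<gamma> m by simp
  have x2: "x ^ 2 = \<gamma> * real m" unfolding x_def using \<gamma> by simp
  define L where "L = nat \<lfloor>x\<rfloor>"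
  have Lx: "real L \<le> x" "x < real L + 1" unfolding L_def using x0 by linarith+
  define M where "M = mode a m"
  note mp = mode_props[OF a, of m]
  have Mm: "M \<le> m" using mp M_def by simp
  define pM where "pM = pb a m M"
  have pM1: "pM \<le> 1" unfolding pM_def using pb_le_1[OF a] .
  have pMn: "pM \<ge> 0" unfolding pM_def using pb_nonneg a by simp
  show ?thesis
  proof (cases "L = 0")
    case True
    then have "x < 1" using Lx by simp
    then have "1 \<le> 2 / x" using x0 by (simp add: field_simps)
    then show ?thesis using pM1 unfolding pM_def M_def x_def \<gamma>_def by simp
  next
    case False
    then have L1: "L \<ge> 1" by simp
    then have x1: "x \<ge> 1" using Lx by simp
    have mx: "real m * (1 - a) = 2 * x ^ 2 / a" unfolding x2 \<gamma>_def using a by (simp add: field_simps)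
    have "2 * x ^ 2 \<le> 2 * x ^ 2 / a" using a x0 by (simp add: field_simps)
    moreover have "x + 1 \<le> 2 * x ^ 2"
    proof -
      have "x * 1 \<le> x * x" using x1 x0 by (intro mult_left_mono) auto
      moreover have "1 * 1 \<le> x * x" using x1 by (intro mult_mono) auto
      ultimately show ?thesis by (simp add: power2_eq_square)
    qed
    ultimately have "a + x \<le> real m * (1 - a)" using mx a by linarith
    then have "real (Suc m) * a + x \<le> real m" by (simp add: algebra_simps)
    then have "real M + real L \<le> real m" using mp(1) Lx M_def by linarith
    then have MLm: "M + L \<le> m" by simp
    define \<rho> where "\<rho> = real (m - M - L + 1) * a / (real (M + L) * (1 - a))"
    have MLpos: "real (M + L) * (1 - a) > 0" using L1 a by simp
    have \<rho>0: "\<rho> \<ge> 0" unfolding \<rho>_def using a MLpos by simp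
    have numer: "real (M + L) * (1 - a) * (1 - \<rho>) = real M + real L - real (Suc m) * a"
      unfolding \<rho>_def using MLpos MLm by (simp add: field_simps of_nat_diff)
    have "real M + real L - real (Suc m) * a \<ge> 0" using mp(2) L1 M_def by linarith
    then have "0 \<le> real (M + L) * (1 - a) * (1 - \<rho>)" using numer by simp
    then have "0 \<le> 1 - \<rho>" using MLpos by (simp add: zero_le_mult_iff)
    then have \<rho>1: "\<rho> \<le> 1" by simp
    have "real M + real L - real (Suc m) * a \<le> real L" using mp(1) M_def by linarith
    then have om: "real (M + L) * (1 - a) * (1 - \<rho>) \<le> real L" using numer by simp
    have "real (M + L) \<ge> a * real m" using mp(2) L1 M_def a by (simp add: algebra_simps)
    then have "real (M + L) * (1 - a) \<ge> (a * real m) * (1 - a)" using a by (intro mult_right_mono) auto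
    moreover have "(a * real m) * (1 - a) = 2 * x ^ 2" unfolding x2 \<gamma>_def by simp
    ultimately have big: "real (M + L) * (1 - a) \<ge> 2 * x ^ 2" by simp
    have "real L * (1 - \<rho>) \<le> 1 / 2"
    proof -
      have "real L * (real (M + L) * (1 - a) * (1 - \<rho>)) \<le> real L * real L"
        using om by (intro mult_left_mono) auto
      also have "\<dots> \<le> x ^ 2" using Lx by (simp add: power2_eq_square mult_mono)
      also have "\<dots> \<le> real (M + L) * (1 - a) / 2" using big by simp
      finally have "(real L * (1 - \<rho>)) * (real (M + L) * (1 - a)) \<le> (1/2) * (real (M + L) * (1 - a))"
        by (simp add: algebra_simps)
      then show ?thesis using MLpos by (rule mult_right_le_imp_le)
    qed
    then have \<rho>L: "\<rho> ^ L \<ge> 1 / 2"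
      using Bernoulli_inequality[of "\<rho> - 1" L] \<rho>0 by (simp add: algebra_simps)
    have step: "pb a m (Suc k) \<ge> \<rho> * pb a m k" if k: "M \<le> k" "k < M + L" for k
    proof -
      have km: "k < m" using k MLm by simp
      have X: "real (Suc k) * (1 - a) > 0" using a by simp
      have n1: "real (m - M - L + 1) \<le> real (m - k)" using k MLm by simp
      have d1: "real (Suc k) \<le> real (M + L)" using k by simp
      have "\<rho> \<le> real (m - k) * a / (real (Suc k) * (1 - a))"
        unfolding \<rho>_def using n1 d1 a X
        by (intro frac_le mult_right_mono mult_left_mono) auto
      then have "\<rho> * pb a m k \<le> real (m - k) * a / (real (Suc k) * (1 - a)) * pb a m k"
        using pb_nonneg a by (intro mult_right_mono) auto
      also have "\<dots> = pb a m (Suc k)" using pb_ratio[OF km, of a] X by (simp add: field_simps)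
      finally show ?thesis .
    qed
    have ind: "i \<le> L \<Longrightarrow> pb a m (M + i) \<ge> \<rho> ^ i * pM" for i
    proof (induction i)
      case 0 then show ?case unfolding pM_def by simp
    next
      case (Suc i)
      then have "\<rho> ^ i * pM \<le> pb a m (M + i)" by simp
      then have "\<rho> * (\<rho> ^ i * pM) \<le> \<rho> * pb a m (M + i)" using \<rho>0 by (rule mult_left_mono)
      also have "\<dots> \<le> pb a m (Suc (M + i))" using step[of "M + i"] Suc by simp
      finally show ?case by simp
    qed
    have "real (Suc L) * (pM / 2) \<le> (\<Sum>i\<le>L. pb a m (M + i))"
    proof -
      have "(\<Sum>i\<le>L. pM / 2) \<le> (\<Sum>i\<le>L. pb a m (M + i))"
      proof (rule sum_mono)
        fix i assume i: "i \<in> {..L}"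
        have "\<rho> ^ L \<le> \<rho> ^ i" using i \<rho>0 \<rho>1 by (intro power_decreasing) auto
        then have "1 / 2 \<le> \<rho> ^ i" using \<rho>L by simp
        then have "(1 / 2) * pM \<le> \<rho> ^ i * pM" using pMn by (rule mult_right_mono)
        then have "pM / 2 \<le> \<rho> ^ i * pM" by simp
        then show "pM / 2 \<le> pb a m (M + i)" using ind[of i] i by simp
      qed
      then show ?thesis by simp
    qed
    also have "(\<Sum>i\<le>L. pb a m (M + i)) = (\<Sum>k\<in>{M..M+L}. pb a m k)"
      using sum.shift_bounds_cl_nat_ivl[of "pb a m" 0 M L] by (simp add: atLeast0AtMost add.commute)
    also have "\<dots> \<le> (\<Sum>k\<le>m. pb a m k)"
      using MLm pb_nonneg a by (intro sum_mono2) auto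
    also have "\<dots> = 1" by (rule pb_sum)
    finally have "real (Suc L) * pM \<le> 2" by simp
    then have "pM \<le> 2 / real (Suc L)" by (simp add: field_simps)
    also have "\<dots> \<le> 2 / x" using Lx x0 by (intro divide_left_mono) auto
    finally show ?thesis unfolding pM_def M_def x_def \<gamma>_def .
  qed
qed




lemma card_divisors_le:
  fixes a :: nat
  assumes a: "a \<ge> 1"
  shows "card {d. d dvd a} \<le> (\<Prod>p\<in>prime_factors a. Suc (multiplicity p a))"
proof -
  define P where "P = prime_factors a"
  define f where "f d = restrict (\<lambda>p. multiplicity p d) P" for d :: nat
  have a0: "a \<noteq> 0" using a by simp
  have finP: "finite P" unfolding P_def by simp
  have "card {d. d dvd a} \<le> card (PiE P (\<lambda>p. {0..multiplicity p a}))"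
  proof (rule card_inj_on_le[where f = f])
    show "inj_on f {d. d dvd a}"
    proof (rule inj_onI)
      fix d1 d2 assume d1: "d1 \<in> {d. d dvd a}" and d2: "d2 \<in> {d. d dvd a}" and eq: "f d1 = f d2"
      have nz: "d1 \<noteq> 0" "d2 \<noteq> 0" using d1 d2 a0 by auto
      have "multiplicity p d1 = multiplicity p d2" if p: "prime p" for p
      proof (cases "p \<in> P")
        case True
        then show ?thesis using fun_cong[OF eq, of p] unfolding f_def by simp
      next
        case False
        then have "\<not> p dvd a" using p a0 unfolding P_def by (simp add: prime_factors_dvd)
        then have "\<not> p dvd d1" "\<not> p dvd d2" using d1 d2 dvd_trans by blast+
        then show ?thesis by (simp add: not_dvd_imp_multiplicity_0)
      qed
      then have "normalize d1 = normalize d2" using nz by (intro multiplicity_eq_imp_eq) auto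
      then show "d1 = d2" by simp
    qed
    show "f ` {d. d dvd a} \<subseteq> PiE P (\<lambda>p. {0..multiplicity p a})"
    proof
      fix g assume "g \<in> f ` {d. d dvd a}"
      then obtain d where d: "d dvd a" "g = f d" by auto
      then show "g \<in> PiE P (\<lambda>p. {0..multiplicity p a})"
        unfolding f_def using a0 by (auto simp: dvd_imp_multiplicity_le)
    qed
    show "finite (PiE P (\<lambda>p. {0..multiplicity p a}))" using finP by (intro finite_PiE) auto
  qed
  also have "\<dots> = (\<Prod>p\<in>P. Suc (multiplicity p a))" using finP by (simp add: card_PiE)
  finally show ?thesis unfolding P_def .
qed

lemma per_prime:
  fixes y \<delta> :: real and e :: nat
  assumes y: "y \<ge> 2" and \<delta>: "\<delta> > 0"
  shows "real (Suc e) \<le> (if 2 \<le> y powr \<delta> then 1 else 1 + 1 / (2 powr \<delta> - 1)) * (y powr \<delta>) ^ e"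
proof (cases "2 \<le> y powr \<delta>")
  case True
  have "real (Suc e) \<le> (1 + 1) ^ e" using Bernoulli_inequality[of 1 e] by simp
  also have "\<dots> \<le> (y powr \<delta>) ^ e" using True by (intro power_mono) auto
  finally show ?thesis using True by simp
next
  case False
  define t where "t = 2 powr \<delta> - 1"
  have "1 < 2 powr \<delta>" using \<delta> by (simp add: powr_less_cancel_iff[of 2 0 \<delta>, simplified])
  then have t: "t > 0" unfolding t_def by simp
  have "1 + real e * t \<le> (1 + t) ^ e" using Bernoulli_inequality[of t e] t by simp
  also have "(1 + t) ^ e \<le> (y powr \<delta>) ^ e"
  proof -
    have "2 powr \<delta> \<le> y powr \<delta>" using y \<delta> by (intro powr_mono2) auto
    then show ?thesis unfolding t_def using t by (intro power_mono) auto
  qed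
  finally have B: "1 + real e * t \<le> (y powr \<delta>) ^ e" .
  have "real (Suc e) \<le> (1 + 1 / t) * (1 + real e * t)"
    using t by (simp add: field_simps)
  also have "\<dots> \<le> (1 + 1 / t) * (y powr \<delta>) ^ e"
    using B t by (intro mult_left_mono) auto
  finally show ?thesis using False unfolding t_def by simp
qed

lemma divisor_bound:
  fixes \<delta> :: real
  assumes \<delta>: "\<delta> > 0"
  shows "\<exists>C\<ge>1. \<forall>a::nat. a \<ge> 1 \<longrightarrow> real (card {d. d dvd a}) \<le> C * real a powr \<delta>"
proof -
  define K where "K = 1 + 1 / (2 powr \<delta> - 1)"
  have "1 < 2 powr \<delta>" using \<delta> by (simp add: powr_less_cancel_iff[of 2 0 \<delta>, simplified])
  then have K1: "K \<ge> 1" unfolding K_def by simp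
  define T where "T = nat \<lceil>2 powr (1 / \<delta>)\<rceil>"
  define c where "c p = (if 2 \<le> real p powr \<delta> then 1 else K)" for p :: nat
  show ?thesis
  proof (intro exI[of _ "K ^ T"] conjI allI impI)
    show "K ^ T \<ge> 1" using K1 by simp
    fix a :: nat assume a: "a \<ge> 1"
    define P where "P = prime_factors a"
    have finP: "finite P" unfolding P_def by simp
    have Pp: "\<And>p. p \<in> P \<Longrightarrow> prime p" unfolding P_def by auto
    have "real (card {d. d dvd a}) \<le> (\<Prod>p\<in>P. real (Suc (multiplicity p a)))"
    proof -
      have "real (card {d. d dvd a}) \<le> real (\<Prod>p\<in>P. Suc (multiplicity p a))"
        using card_divisors_le[OF a] unfolding P_def by (simp only: of_nat_le_iff)
      then show ?thesis by (simp only: of_nat_prod)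
    qed
    also have "\<dots> \<le> (\<Prod>p\<in>P. c p * (real p powr \<delta>) ^ multiplicity p a)"
    proof (rule prod_mono)
      fix p assume "p \<in> P"
      then have "real p \<ge> 2" using Pp prime_ge_2_nat by fastforce
      then show "0 \<le> real (Suc (multiplicity p a)) \<and> real (Suc (multiplicity p a)) \<le> c p * (real p powr \<delta>) ^ multiplicity p a"
        using per_prime[OF _ \<delta>, of "real p" "multiplicity p a"] unfolding c_def K_def by simp
    qed
    also have "\<dots> = (\<Prod>p\<in>P. c p) * (\<Prod>p\<in>P. (real p powr \<delta>) ^ multiplicity p a)"
      by (rule prod.distrib)
    also have "(\<Prod>p\<in>P. (real p powr \<delta>) ^ multiplicity p a) = real a powr \<delta>"
    proof -
      have "(\<Prod>p\<in>P. (real p powr \<delta>) ^ multiplicity p a) = (\<Prod>p\<in>P. (real p ^ multiplicity p a) powr \<delta>)"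
      proof (rule prod.cong[OF refl])
        fix p assume "p \<in> P"
        then have p0: "real p > 0" using Pp prime_gt_0_nat by fastforce
        have "(real p ^ multiplicity p a) powr \<delta> = (real p powr real (multiplicity p a)) powr \<delta>"
          using p0 by (simp add: powr_realpow)
        also have "\<dots> = (real p powr \<delta>) ^ multiplicity p a"
          using p0 by (simp add: powr_powr powr_power mult.commute)
        finally show "(real p powr \<delta>) ^ multiplicity p a = (real p ^ multiplicity p a) powr \<delta>" by simp
      qed
      also have "\<dots> = (\<Prod>p\<in>P. real p ^ multiplicity p a) powr \<delta>" by (rule prod_powr_distrib[symmetric])
      also have "(\<Prod>p\<in>P. real p ^ multiplicity p a) = real a"
      proof -
        have eq: "a = (\<Prod>p\<in>P. p ^ multiplicity p a)" using prime_factorization_nat[of a] a unfolding P_def by simp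
        have "real a = real (\<Prod>p\<in>P. p ^ multiplicity p a)" using eq by (rule arg_cong)
        then show ?thesis by simp
      qed
      finally show ?thesis .
    qed
    also have "(\<Prod>p\<in>P. c p) \<le> K ^ T"
    proof -
      define Sm where "Sm = {p\<in>P. \<not> 2 \<le> real p powr \<delta>}"
      have "(\<Prod>p\<in>P. c p) = (\<Prod>p\<in>P. if \<not> 2 \<le> real p powr \<delta> then K else 1)"
        unfolding c_def by (intro prod.cong) auto
      also have "\<dots> = (\<Prod>p\<in>Sm. K)"
        unfolding Sm_def using finP by (rule prod.inter_filter[symmetric])
      also have "\<dots> = K ^ card Sm" by simp
      also have "card Sm \<le> T"
      proof -
        have "Sm \<subseteq> {..<T}"
        proof
          fix p assume p: "p \<in> Sm"
          then have "real p powr \<delta> < 2" unfolding Sm_def by simp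
          then have "(real p powr \<delta>) powr (1 / \<delta>) < 2 powr (1 / \<delta>)"
            using \<delta> by (intro powr_less_mono2) auto
          then have "real p < 2 powr (1 / \<delta>)" using \<delta> by (simp add: powr_powr)
          then have "real p < of_int \<lceil>2 powr (1 / \<delta>)\<rceil>" using le_of_int_ceiling by (rule less_le_trans)
          then have "int p < \<lceil>2 powr (1 / \<delta>)\<rceil>" by (metis of_int_of_nat_eq of_int_less_iff)
          then show "p \<in> {..<T}" unfolding T_def by simp
        qed
        then show ?thesis using card_mono[of "{..<T}" Sm] by simp
      qed
      then have "K ^ card Sm \<le> K ^ T" using K1 by (intro power_increasing) auto
      finally show ?thesis .
    qed
    then have "(\<Prod>p\<in>P. c p) * real a powr \<delta> \<le> K ^ T * real a powr \<delta>"
      by (intro mult_right_mono) auto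
    finally show "real (card {d. d dvd a}) \<le> K ^ T * real a powr \<delta>" .
  qed
qed




lemma prod_if_cond:
  fixes f :: "'a \<Rightarrow> real"
  assumes "finite A"
  shows "(\<Prod>j\<in>A. if P j then f j else 0) = (if \<forall>j\<in>A. P j then (\<Prod>j\<in>A. f j) else 0)"
proof (cases "\<forall>j\<in>A. P j")
  case True then show ?thesis by (simp cong: prod.cong)
next
  case False
  then obtain j where "j \<in> A" "\<not> P j" by auto
  then show ?thesis using assms False by (intro trans[OF prod_zero]) auto
qed

lemma mu_abs: "\<bar>moebius_mu d\<bar> \<le> 1"
  unfolding moebius_mu_def by (auto simp: power_abs)

lemma prod_dvd_coprime_int:
  fixes q :: "'a \<Rightarrow> nat" and y :: int
  assumes "finite A" "\<forall>i\<in>A. \<forall>j\<in>A. i \<noteq> j \<longrightarrow> coprime (q i) (q j)" "\<forall>i\<in>A. int (q i) dvd y"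
  shows "int (\<Prod>i\<in>A. q i) dvd y"
  using assms
proof (induction A rule: finite_induct)
  case empty then show ?case by simp
next
  case (insert i A)
  have "coprime (q i) (\<Prod>j\<in>A. q j)"
    using insert by (intro prod_coprime_right) (metis insert_iff)
  then have cop: "coprime (int (q i)) (int (\<Prod>j\<in>A. q j))" by (simp only: coprime_int_iff)
  have "int (\<Prod>j\<in>A. q j) dvd y" using insert by auto
  moreover have "int (q i) dvd y" using insert by auto
  ultimately have "int (q i) * int (\<Prod>j\<in>A. q j) dvd y" using cop by (intro divides_mult)
  then show ?case using insert by simp
qed

lemma crt_int:
  fixes q :: "'a \<Rightarrow> nat" and t :: "'a \<Rightarrow> int"
  assumes fin: "finite A" and cop: "\<forall>i\<in>A. \<forall>j\<in>A. i \<noteq> j \<longrightarrow> coprime (q i) (q j)" and q1: "\<forall>i\<in>A. q i \<ge> 1"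
  shows "\<exists>r. \<forall>k::int. (\<forall>j\<in>A. int (q j) dvd k - t j) \<longleftrightarrow> int (\<Prod>j\<in>A. q j) dvd k - r"
proof -
  obtain x where x: "\<forall>i\<in>A. [x = nat (t i mod int (q i))] (mod q i)"
    using chinese_remainder_nat[where u = "\<lambda>i. nat (t i mod int (q i))", OF fin cop] by blast
  have xr: "int (q j) dvd int x - t j" if j: "j \<in> A" for j
  proof -
    have qp: "int (q j) > 0" using q1 j by auto
    have "x mod q j = nat (t j mod int (q j)) mod q j" using x j by (simp add: cong_def)
    then have "int (x mod q j) = int (nat (t j mod int (q j)) mod q j)" by simp
    then have "int x mod int (q j) = (t j mod int (q j)) mod int (q j)"
      using qp by (simp add: zmod_int)
    then have "int x mod int (q j) = t j mod int (q j)" by simp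
    then show ?thesis by (simp add: mod_eq_dvd_iff)
  qed
  show ?thesis
  proof (intro exI[of _ "int x"] allI iffI)
    fix k :: int
    assume h: "\<forall>j\<in>A. int (q j) dvd k - t j"
    have "\<forall>j\<in>A. int (q j) dvd k - int x"
    proof
      fix j assume j: "j \<in> A"
      have "k - int x = (k - t j) - (int x - t j)" by simp
      then show "int (q j) dvd k - int x" using h xr[OF j] j by (metis dvd_diff)
    qed
    then show "int (\<Prod>j\<in>A. q j) dvd k - int x" using fin cop by (intro prod_dvd_coprime_int) auto
  next
    fix k :: int
    assume h: "int (\<Prod>j\<in>A. q j) dvd k - int x"
    show "\<forall>j\<in>A. int (q j) dvd k - t j"
    proof
      fix j assume j: "j \<in> A"
      have "q j dvd (\<Prod>j\<in>A. q j)" using fin j by (rule dvd_prodI)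
      then have "int (q j) dvd int (\<Prod>j\<in>A. q j)" by (simp only: int_dvd_int_iff)
      then have "int (q j) dvd k - int x" using h dvd_trans by blast
      moreover have "k - t j = (k - int x) + (int x - t j)" by simp
      ultimately show "int (q j) dvd k - t j" using xr[OF j] by (metis dvd_add)
    qed
  qed
qed


lemma noncop_empty:
  fixes dd :: "nat \<Rightarrow> nat" and s t :: "nat \<Rightarrow> int" and n k :: int
  assumes b: "b1 \<ge> 1" "b2 \<ge> 1"
    and hyp: "gcdb b1 b2 (s j1 - s j2) (t j1 - t j2) = 1"
    and nc: "\<not> coprime (dd j1) (dd j2)" and pos: "dd j1 \<ge> 1"
    and d1: "int (dd j1) ^ b1 dvd n - s j1" "int (dd j2) ^ b1 dvd n - s j2"
  shows "\<not> (int (dd j1) ^ b2 dvd k - t j1 \<and> int (dd j2) ^ b2 dvd k - t j2)"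
proof
  assume h: "int (dd j1) ^ b2 dvd k - t j1 \<and> int (dd j2) ^ b2 dvd k - t j2"
  define g where "g = gcd (dd j1) (dd j2)"
  have g1: "g \<noteq> 1" using nc unfolding g_def by (simp add: coprime_iff_gcd_eq_1)
  have g0: "g \<ge> 1" unfolding g_def using pos by (simp add: Suc_le_eq)
  have gd: "int g ^ b dvd int (dd j1) ^ b" "int g ^ b dvd int (dd j2) ^ b" for b
    unfolding g_def by (simp_all add: dvd_power_same)
  define X where "X = s j1 - s j2"
  define Y where "Y = t j1 - t j2"
  have e1: "int g ^ b1 dvd n - s j1" and e2: "int g ^ b1 dvd n - s j2" using gd d1 dvd_trans by blast+
  have "int g ^ b1 dvd (n - s j2) - (n - s j1)" by (rule dvd_diff[OF e2 e1])
  then have gX: "int g ^ b1 dvd X" unfolding X_def by simp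
  have f1: "int g ^ b2 dvd k - t j1" and f2: "int g ^ b2 dvd k - t j2" using gd h dvd_trans by blast+
  have "int g ^ b2 dvd (k - t j2) - (k - t j1)" by (rule dvd_diff[OF f2 f1])
  then have gY: "int g ^ b2 dvd Y" unfolding Y_def by simp
  define Sg where "Sg = {d::nat. d \<ge> 1 \<and> int d ^ b1 dvd X \<and> int d ^ b2 dvd Y}"
  have hyp': "gcdb b1 b2 X Y = 1" using hyp unfolding X_def Y_def .
  show False
  proof (cases "X = 0 \<and> Y = 0")
    case True
    then show False using hyp' unfolding gcdb_def by simp
  next
    case False
    then have gc: "gcdb b1 b2 X Y = Max Sg" unfolding gcdb_def Sg_def by (simp only: if_False)
    have "finite Sg"
    proof (cases "X = 0")
      case False
      show ?thesis unfolding Sg_def by (rule finite_subset[OF _ fin_pow_dvd'[OF False b(1)]]) auto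
    next
      case True
      then have Y0: "Y \<noteq> 0" using \<open>\<not> (X = 0 \<and> Y = 0)\<close> by simp
      show ?thesis unfolding Sg_def by (rule finite_subset[OF _ fin_pow_dvd'[OF Y0 b(2)]]) auto
    qed
    moreover have "g \<in> Sg" unfolding Sg_def using g0 gX gY by simp
    ultimately have "g \<le> Max Sg" by (rule Max_ge)
    then show False using hyp' gc g0 g1 by simp
  qed
qed




lemma powr_half_inv: "real m \<ge> 1 \<Longrightarrow> real m powr (-1/2) = 1 / sqrt (real m)"
  by (simp add: powr_minus_divide powr_half_sqrt[symmetric])

theorem lemma2p6:
  fixes b1 b2 J :: nat and \<alpha> \<epsilon> :: real
  assumes "b1 \<ge> 1" "b2 \<ge> 1" "coprime b1 b2" "J \<ge> 1"
    and "0 < \<alpha>" "\<alpha> < 1" "\<epsilon> > 0"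
  shows "\<exists>C::real. \<forall>(m::nat) (s::nat \<Rightarrow> int) (t::nat \<Rightarrow> int) (n::int).
           m \<ge> 1 \<longrightarrow>
           (\<forall>j1<J. \<forall>j2<J. j1 \<noteq> j2 \<longrightarrow> gcdb b1 b2 (s j1 - s j2) (t j1 - t j2) = 1) \<longrightarrow>
           (\<forall>j<J. \<bar>s j\<bar> < n) \<longrightarrow>
           \<bar>(\<Sum>k \<in> {k. k \<le> m \<and> (\<forall>j<J. gcdb b1 b2 (n - s j) (int k - t j) = 1)}.
                 real (m choose k) * \<alpha> ^ k * (1 - \<alpha>) ^ (m - k))
             - fbs b1 b2 J s n\<bar>
           \<le> C * real_of_int n powr \<epsilon> * real m powr (-1/2)"
proof -
  note b = assms(1,2)
  have J: "J \<ge> 1" using assms(4) .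
  have a: "0 < \<alpha>" "\<alpha> < 1" using assms(5,6) by auto
  define \<delta> where "\<delta> = \<epsilon> / real J"
  have \<delta>: "\<delta> > 0" unfolding \<delta>_def using J assms(7) by simp
  obtain Cd where Cd: "Cd \<ge> 1" "\<forall>a::nat. a \<ge> 1 \<longrightarrow> real (card {d. d dvd a}) \<le> Cd * real a powr \<delta>"
    using divisor_bound[OF \<delta>] by blast
  define \<gamma> where "\<gamma> = \<alpha> * (1 - \<alpha>) / 2"
  have \<gamma>: "\<gamma> > 0" unfolding \<gamma>_def using a by simp
  define Bc where "Bc = 4 / sqrt \<gamma>"
  define C where "C = (Cd * 2 powr \<delta>) ^ J * Bc"
  show ?thesis
  proof (intro exI[of _ C] allI impI)
    fix m :: nat and s t :: "nat \<Rightarrow> int" and n :: int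
    assume m: "m \<ge> 1"
      and hyp: "\<forall>j1<J. \<forall>j2<J. j1 \<noteq> j2 \<longrightarrow> gcdb b1 b2 (s j1 - s j2) (t j1 - t j2) = 1"
      and sn: "\<forall>j<J. \<bar>s j\<bar> < n"
    have n0: "n > 0" using sn J by (metis abs_ge_zero le_less_trans less_one linorder_not_le not_one_le_zero)
    define Dj where "Dj j = {d::nat. d \<ge> 1 \<and> int d ^ b1 dvd n - s j}" for j
    have aj: "n - s j > 0" if "j < J" for j using sn that by auto
    have finDj: "finite (Dj j)" if "j < J" for j
      unfolding Dj_def using aj[OF that] b by (intro fin_pow_dvd') auto
    define PI where "PI = PiE {..<J} Dj"
    have finPI: "finite PI" unfolding PI_def using finDj by (intro finite_PiE) auto
    define cond where "cond dd k \<longleftrightarrow> (\<forall>j<J. int (dd j) ^ b2 dvd int k - t j)" for dd :: "nat \<Rightarrow> nat" and k :: nat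
    define Pd where "Pd dd = (\<Sum>k\<le>m. if cond dd k then pb \<alpha> m k else 0)" for dd
    define mup where "mup dd = real_of_int (\<Prod>j<J. moebius_mu (dd j))" for dd
    define Cop where "Cop = {dd\<in>PI. \<forall>j1<J. \<forall>j2<J. j1 \<noteq> j2 \<longrightarrow> coprime (dd j1) (dd j2)}"
    define X where "X j d k = (if int d ^ b2 dvd int k - t j then moebius_mu d else 0)" for j d k
    have chi: "real_of_int (\<Sum>d\<in>Dj j. X j d k) = (if gcdb b1 b2 (n - s j) (int k - t j) = 1 then 1 else 0)"
      if j: "j < J" for j k
    proof -
      have "n - s j \<noteq> 0" using aj[OF j] by simp
      from mobius_gcdb[OF this b, of "int k - t j"]
      have e: "(\<Sum>d\<in>Dj j. X j d k) = (if gcdb b1 b2 (n - s j) (int k - t j) = 1 then 1 else 0)"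
        unfolding Dj_def X_def by (rule sym)
      show ?thesis unfolding e by simp
    qed

    define LHS where "LHS = (\<Sum>k \<in> {k. k \<le> m \<and> (\<forall>j<J. gcdb b1 b2 (n - s j) (int k - t j) = 1)}.
                 real (m choose k) * \<alpha> ^ k * (1 - \<alpha>) ^ (m - k))"
    have L1: "LHS = (\<Sum>k\<le>m. pb \<alpha> m k * (\<Prod>j<J. real_of_int (\<Sum>d\<in>Dj j. X j d k)))"
    proof -
      have "(\<Prod>j<J. real_of_int (\<Sum>d\<in>Dj j. X j d k)) =
            (if \<forall>j\<in>{..<J}. gcdb b1 b2 (n - s j) (int k - t j) = 1 then 1 else 0)" for k
      proof -
        have "(\<Prod>j<J. real_of_int (\<Sum>d\<in>Dj j. X j d k)) =
              (\<Prod>j<J. if gcdb b1 b2 (n - s j) (int k - t j) = 1 then 1 else 0)"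
          using chi by (intro prod.cong) auto
        also have "\<dots> = (if \<forall>j\<in>{..<J}. gcdb b1 b2 (n - s j) (int k - t j) = 1 then (\<Prod>j<J. 1) else 0)"
          by (rule prod_if_cond) simp
        finally show ?thesis by simp
      qed
      then have "(\<Sum>k\<le>m. pb \<alpha> m k * (\<Prod>j<J. real_of_int (\<Sum>d\<in>Dj j. X j d k))) =
                 (\<Sum>k\<le>m. if \<forall>j<J. gcdb b1 b2 (n - s j) (int k - t j) = 1 then pb \<alpha> m k else 0)"
        by (intro sum.cong) auto
      also have "\<dots> = (\<Sum>k\<in>{k\<in>{..m}. \<forall>j<J. gcdb b1 b2 (n - s j) (int k - t j) = 1}. pb \<alpha> m k)"
        by (rule sum.inter_filter[symmetric]) simp
      also have "\<dots> = LHS" unfolding LHS_def pb_def by (intro sum.cong) auto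
      finally show ?thesis by simp
    qed
    have L2: "(\<Sum>k\<le>m. pb \<alpha> m k * (\<Prod>j<J. real_of_int (\<Sum>d\<in>Dj j. X j d k))) = (\<Sum>dd\<in>PI. mup dd * Pd dd)"
    proof -
      have pk: "(\<Prod>j<J. real_of_int (\<Sum>d\<in>Dj j. X j d k)) = (\<Sum>dd\<in>PI. if cond dd k then mup dd else 0)" for k
      proof -
        have "(\<Prod>j<J. real_of_int (\<Sum>d\<in>Dj j. X j d k)) = (\<Prod>j<J. \<Sum>d\<in>Dj j. real_of_int (X j d k))"
          by simp
        also have "\<dots> = (\<Sum>dd\<in>PI. \<Prod>j<J. real_of_int (X j (dd j) k))"
          unfolding PI_def using finDj by (intro prod_sum_PiE) auto
        also have "\<dots> = (\<Sum>dd\<in>PI. if cond dd k then mup dd else 0)"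
        proof (rule sum.cong[OF refl])
          fix dd
          have "(\<Prod>j<J. real_of_int (X j (dd j) k)) =
                (\<Prod>j<J. if int (dd j) ^ b2 dvd int k - t j then real_of_int (moebius_mu (dd j)) else 0)"
            unfolding X_def by (intro prod.cong) auto
          also have "\<dots> = (if \<forall>j\<in>{..<J}. int (dd j) ^ b2 dvd int k - t j then (\<Prod>j<J. real_of_int (moebius_mu (dd j))) else 0)"
            by (rule prod_if_cond) simp
          also have "\<dots> = (if cond dd k then mup dd else 0)" unfolding cond_def mup_def by auto
          finally show "(\<Prod>j<J. real_of_int (X j (dd j) k)) = (if cond dd k then mup dd else 0)" .
        qed
        finally show ?thesis .
      qed
      have "(\<Sum>k\<le>m. pb \<alpha> m k * (\<Prod>j<J. real_of_int (\<Sum>d\<in>Dj j. X j d k))) =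
            (\<Sum>k\<le>m. \<Sum>dd\<in>PI. if cond dd k then mup dd * pb \<alpha> m k else 0)"
        unfolding pk by (simp add: sum_distrib_left if_distrib mult.commute cong: if_cong)
      also have "\<dots> = (\<Sum>dd\<in>PI. \<Sum>k\<le>m. if cond dd k then mup dd * pb \<alpha> m k else 0)"
        by (rule sum.swap)
      also have "\<dots> = (\<Sum>dd\<in>PI. mup dd * Pd dd)"
        unfolding Pd_def by (simp add: sum_distrib_left if_distrib cong: if_cong)
      finally show ?thesis .
    qed
    have F1: "fbs b1 b2 J s n = (\<Sum>dd\<in>Cop. mup dd / real (\<Prod>j<J. dd j) ^ b2)"
    proof -
      have "{d \<in> {..<J} \<rightarrow>\<^sub>E {1..}.
              (\<forall>j<J. int (d j) ^ b1 dvd n - s j) \<and>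
              (\<forall>j1<J. \<forall>j2<J. j1 \<noteq> j2 \<longrightarrow> coprime (d j1) (d j2))} = Cop"
        unfolding Cop_def PI_def Dj_def by (auto simp: PiE_iff)
      then show ?thesis unfolding fbs_def mup_def by simp
    qed
    have PIsplit: "(\<Sum>dd\<in>PI. mup dd * Pd dd) = (\<Sum>dd\<in>Cop. mup dd * Pd dd)"
    proof (rule sum.mono_neutral_right[OF finPI])
      show "Cop \<subseteq> PI" unfolding Cop_def by auto
      show "\<forall>dd\<in>PI - Cop. mup dd * Pd dd = 0"
      proof
        fix dd assume dd: "dd \<in> PI - Cop"
        then obtain j1 j2 where j: "j1 < J" "j2 < J" "j1 \<noteq> j2" "\<not> coprime (dd j1) (dd j2)"
          unfolding Cop_def by auto
        have ddD: "dd j \<in> Dj j" if "j < J" for j using dd that unfolding PI_def by auto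
        have "\<not> cond dd k" for k
        proof
          assume "cond dd k"
          then have c: "int (dd j1) ^ b2 dvd int k - t j1 \<and> int (dd j2) ^ b2 dvd int k - t j2"
            unfolding cond_def using j by auto
          have "gcdb b1 b2 (s j1 - s j2) (t j1 - t j2) = 1" using hyp j by auto
          from noncop_empty[OF b this j(4)] show False
            using ddD[OF j(1)] ddD[OF j(2)] c unfolding Dj_def by auto
        qed
        then have "Pd dd = 0" unfolding Pd_def by simp
        then show "mup dd * Pd dd = 0" by simp
      qed
    qed
    define E where "E = Bc * real m powr (-1/2)"
    have E0: "E \<ge> 0" unfolding E_def Bc_def using \<gamma> by simp
    have Ebound: "\<bar>mup dd * (Pd dd - 1 / real (\<Prod>j<J. dd j) ^ b2)\<bar> \<le> E" if dd: "dd \<in> Cop" for dd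
    proof -
      have ddD: "dd j \<in> Dj j" if "j < J" for j using dd that unfolding Cop_def PI_def by auto
      have mu1: "\<bar>mup dd\<bar> \<le> 1"
      proof -
        have "\<bar>mup dd\<bar> = (\<Prod>j<J. \<bar>real_of_int (moebius_mu (dd j))\<bar>)" unfolding mup_def by (simp add: abs_prod)
        also have "\<dots> \<le> 1" using mu_abs by (intro prod_le_1) (auto simp del: of_int_abs simp: of_int_abs[symmetric])
        finally show ?thesis .
      qed
      define q where "q j = dd j ^ b2" for j
      have cop: "\<forall>i\<in>{..<J}. \<forall>j\<in>{..<J}. i \<noteq> j \<longrightarrow> coprime (q i) (q j)"
        using dd unfolding Cop_def q_def by auto
      have q1: "\<forall>i\<in>{..<J}. q i \<ge> 1" using ddD unfolding q_def Dj_def by auto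
      obtain r where r: "\<forall>k::int. (\<forall>j\<in>{..<J}. int (q j) dvd k - t j) \<longleftrightarrow> int (\<Prod>j<J. q j) dvd k - r"
        using crt_int[OF _ cop q1, of t] by auto
      define Qn where "Qn = (\<Prod>j<J. q j)"
      have Qn1: "Qn \<ge> 1" unfolding Qn_def using q1 by (metis One_nat_def Suc_le_eq prod_pos lessThan_iff)
      have ck: "cond dd k \<longleftrightarrow> int Qn dvd int k - r" for k
      proof -
        have "cond dd k \<longleftrightarrow> (\<forall>j\<in>{..<J}. int (q j) dvd int k - t j)" unfolding cond_def q_def by auto
        also have "\<dots> \<longleftrightarrow> int Qn dvd int k - r" using r unfolding Qn_def by blast
        finally show ?thesis .
      qed
      have PdQ: "Pd dd = (\<Sum>k\<le>m. if int Qn dvd int k - r then pb \<alpha> m k else 0)"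
        unfolding Pd_def ck ..
      have Qeq: "real (\<Prod>j<J. dd j) ^ b2 = real Qn"
        unfolding Qn_def q_def by (simp add: prod_power_distrib)
      have "\<bar>Pd dd - 1 / real Qn\<bar> \<le> 2 * pb \<alpha> m (mode \<alpha> m)"
        unfolding PdQ by (rule binom_resid[OF a Qn1])
      also have "\<dots> \<le> 2 * (2 / sqrt (\<alpha> * (1 - \<alpha>) / 2 * real m))"
        using pb_mode_bound[OF a m] by simp
      also have "\<dots> = E"
      proof -
        have "sqrt (\<alpha> * (1 - \<alpha>) / 2 * real m) = sqrt \<gamma> * sqrt (real m)"
          unfolding \<gamma>_def by (rule real_sqrt_mult)
        then show ?thesis unfolding E_def Bc_def using powr_half_inv[of m] m by simp
      qed
      finally have h: "\<bar>Pd dd - 1 / real Qn\<bar> \<le> E" .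
      have "\<bar>mup dd * (Pd dd - 1 / real (\<Prod>j<J. dd j) ^ b2)\<bar> = \<bar>mup dd\<bar> * \<bar>Pd dd - 1 / real Qn\<bar>"
        unfolding Qeq by (simp add: abs_mult)
      also have "\<dots> \<le> 1 * E" using mu1 h by (intro mult_mono) auto
      finally show ?thesis by simp
    qed
    have cardPI: "real (card PI) \<le> (Cd * 2 powr \<delta>) ^ J * real_of_int n powr \<epsilon>"
    proof -
      have cj: "real (card (Dj j)) \<le> Cd * 2 powr \<delta> * real_of_int n powr \<delta>" if j: "j < J" for j
      proof -
        define A where "A = nat (n - s j)"
        have A1: "A \<ge> 1" unfolding A_def using aj[OF j] by simp
        have sub: "Dj j \<subseteq> {d. d dvd A}"
        proof
          fix d assume "d \<in> Dj j"
          then have d: "d \<ge> 1" "int d ^ b1 dvd n - s j" unfolding Dj_def by auto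
          have "int d dvd int d ^ b1" using b by (simp add: dvd_power)
          then have "int d dvd n - s j" using d dvd_trans by blast
          then have "int d dvd int A" unfolding A_def using aj[OF j] by simp
          then show "d \<in> {d. d dvd A}" by simp
        qed
        have "card (Dj j) \<le> card {d. d dvd A}"
          using A1 by (intro card_mono[OF _ sub]) (auto intro: finite_divisors_nat)
        then have "real (card (Dj j)) \<le> real (card {d. d dvd A})" by simp
        also have "\<dots> \<le> Cd * real A powr \<delta>" using Cd(2) A1 by simp
        also have "real A powr \<delta> \<le> (2 * real_of_int n) powr \<delta>"
        proof -
          have "real A = real_of_int (n - s j)" unfolding A_def using aj[OF j] by simp
          also have "\<dots> \<le> 2 * real_of_int n"
          proof -
            have i: "n - s j \<le> 2 * n" using sn j by (auto simp: abs_less_iff)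
            have "real_of_int (n - s j) \<le> real_of_int (2 * n)" using i by (simp only: of_int_le_iff)
            then show ?thesis by simp
          qed
          finally show ?thesis using \<delta> by (intro powr_mono2) auto
        qed
        then have "Cd * real A powr \<delta> \<le> Cd * (2 * real_of_int n) powr \<delta>" using Cd(1) by (intro mult_left_mono) auto
        also have "\<dots> = Cd * 2 powr \<delta> * real_of_int n powr \<delta>" using n0 by (simp add: powr_mult)
        finally show ?thesis .
      qed
      have "real (card PI) = (\<Prod>j<J. real (card (Dj j)))" unfolding PI_def by (simp add: card_PiE)
      also have "\<dots> \<le> (\<Prod>j<J. Cd * 2 powr \<delta> * real_of_int n powr \<delta>)"
        using cj by (intro prod_mono) auto
      also have "\<dots> = (Cd * 2 powr \<delta>) ^ J * (real_of_int n powr \<delta>) ^ J" by (simp add: power_mult_distrib)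
      also have "(real_of_int n powr \<delta>) ^ J = real_of_int n powr \<epsilon>"
        using n0 J unfolding \<delta>_def by (simp add: powr_power)
      finally show ?thesis .
    qed
    have "LHS - fbs b1 b2 J s n = (\<Sum>dd\<in>Cop. mup dd * (Pd dd - 1 / real (\<Prod>j<J. dd j) ^ b2))"
      unfolding L1 L2 PIsplit F1 by (simp add: sum_subtractf right_diff_distrib)
    also have "\<bar>\<dots>\<bar> \<le> (\<Sum>dd\<in>Cop. \<bar>mup dd * (Pd dd - 1 / real (\<Prod>j<J. dd j) ^ b2)\<bar>)" by (rule sum_abs)
    also have "\<dots> \<le> (\<Sum>dd\<in>Cop. E)" using Ebound by (intro sum_mono) auto
    also have "\<dots> = real (card Cop) * E" by simp
    also have "\<dots> \<le> real (card PI) * E"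
    proof -
      have "card Cop \<le> card PI" unfolding Cop_def using finPI by (intro card_mono) auto
      then show ?thesis using E0 by (intro mult_right_mono) auto
    qed

    also have "\<dots> \<le> (Cd * 2 powr \<delta>) ^ J * real_of_int n powr \<epsilon> * E"
      using cardPI E0 by (intro mult_right_mono) auto
    also have "\<dots> = C * real_of_int n powr \<epsilon> * real m powr (-1/2)"
      unfolding C_def E_def by (simp add: algebra_simps)
    finally show "\<bar>(\<Sum>k \<in> {k. k \<le> m \<and> (\<forall>j<J. gcdb b1 b2 (n - s j) (int k - t j) = 1)}.
                 real (m choose k) * \<alpha> ^ k * (1 - \<alpha>) ^ (m - k))
             - fbs b1 b2 J s n\<bar>
           \<le> C * real_of_int n powr \<epsilon> * real m powr (-1/2)" unfolding LHS_def .
  qed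
qed


end
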